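(* Let $G=(V,E)$ be a finite, simple, connected reflective graph. Let $x,x'\in V$ with $d(x,x')=n-1$ for some integer $n\geq 1$, and assume the subgraph induced on $S_1(x)$ is connected. Then $S_1(x)\cap S_n(x')$ is isometric.
   Context: $d$ is the combinatorial distance, $S_n(x)=\{v:d(v,x)=n\}$. For adjacent $x\sim y$ let $V_x^y=\{v: d(v,x)<d(v,y)\}$, $V^{xy}=\{v:d(v,x)=d(v,y)\}$. A reflection from $x$ to $y$ is a graph automorphism $\phi$ with $\phi\circ\phi=\mathrm{id}$, $\phi(x)=y$, such that the edges between $V_x^y$ and $V_y^x$ are exactly $\{\{x',\phi(x')\}:x'\in V_x^y\}$ and $\phi$ fixes $V^{xy}$ pointwise. A graph is reflective if every edge admits a reflection. A set $W\subseteq V$ is isometric if for all $w,w'\in W$ there is a shortest path in $G$ from $w$ to $w'$ all of whose vertices lie in $W$. *)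

theory Defs
  imports Main
begin

definition simple_graph :: "'a set \<Rightarrow> ('a \<Rightarrow> 'a \<Rightarrow> bool) \<Rightarrow> bool" where
  "simple_graph V E \<longleftrightarrow> finite V \<and> (\<forall>a b. E a b \<longrightarrow> a \<in> V \<and> b \<in> V)
     \<and> (\<forall>a b. E a b \<longrightarrow> E b a) \<and> (\<forall>a. \<not> E a a)"

definition walk_betw :: "('a \<Rightarrow> 'a \<Rightarrow> bool) \<Rightarrow> 'a list \<Rightarrow> 'a \<Rightarrow> 'a \<Rightarrow> bool" where
  "walk_betw E p a b \<longleftrightarrow> p \<noteq> [] \<and> hd p = a \<and> last p = b \<and> successively E p"

definition connected_graph :: "'a set \<Rightarrow> ('a \<Rightarrow> 'a \<Rightarrow> bool) \<Rightarrow> bool" where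
  "connected_graph V E \<longleftrightarrow> (\<forall>a\<in>V. \<forall>b\<in>V. \<exists>p. walk_betw E p a b)"

definition dist :: "('a \<Rightarrow> 'a \<Rightarrow> bool) \<Rightarrow> 'a \<Rightarrow> 'a \<Rightarrow> nat" where
  "dist E a b = (LEAST n. \<exists>p. walk_betw E p a b \<and> length p = Suc n)"

definition sphere :: "'a set \<Rightarrow> ('a \<Rightarrow> 'a \<Rightarrow> bool) \<Rightarrow> nat \<Rightarrow> 'a \<Rightarrow> 'a set" where
  "sphere V E n x = {v \<in> V. dist E v x = n}"

definition half :: "'a set \<Rightarrow> ('a \<Rightarrow> 'a \<Rightarrow> bool) \<Rightarrow> 'a \<Rightarrow> 'a \<Rightarrow> 'a set" where
  "half V E x y = {v \<in> V. dist E v x < dist E v y}"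

definition mid :: "'a set \<Rightarrow> ('a \<Rightarrow> 'a \<Rightarrow> bool) \<Rightarrow> 'a \<Rightarrow> 'a \<Rightarrow> 'a set" where
  "mid V E x y = {v \<in> V. dist E v x = dist E v y}"

definition automorphism :: "'a set \<Rightarrow> ('a \<Rightarrow> 'a \<Rightarrow> bool) \<Rightarrow> ('a \<Rightarrow> 'a) \<Rightarrow> bool" where
  "automorphism V E \<phi> \<longleftrightarrow> bij_betw \<phi> V V \<and> (\<forall>a\<in>V. \<forall>b\<in>V. E a b \<longleftrightarrow> E (\<phi> a) (\<phi> b))"

text \<open>Reflection from x to y (functions considered on V only). The edges between the
  two halves, oriented from V_x^y to V_y^x, are exactly the pairs (x', phi x').\<close>
definition reflection :: "'a set \<Rightarrow> ('a \<Rightarrow> 'a \<Rightarrow> bool) \<Rightarrow> 'a \<Rightarrow> 'a \<Rightarrow> ('a \<Rightarrow> 'a) \<Rightarrow> bool" where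
  "reflection V E x y \<phi> \<longleftrightarrow> automorphism V E \<phi> \<and> (\<forall>v\<in>V. \<phi> (\<phi> v) = v) \<and> \<phi> x = y
     \<and> {(a, b). a \<in> half V E x y \<and> b \<in> half V E y x \<and> E a b} = {(a, \<phi> a) | a. a \<in> half V E x y}
     \<and> (\<forall>v\<in>mid V E x y. \<phi> v = v)"

definition reflective :: "'a set \<Rightarrow> ('a \<Rightarrow> 'a \<Rightarrow> bool) \<Rightarrow> bool" where
  "reflective V E \<longleftrightarrow> (\<forall>x y. E x y \<longrightarrow> (\<exists>\<phi>. reflection V E x y \<phi>))"

definition induced_connected :: "('a \<Rightarrow> 'a \<Rightarrow> bool) \<Rightarrow> 'a set \<Rightarrow> bool" where
  "induced_connected E W \<longleftrightarrow> (\<forall>a\<in>W. \<forall>b\<in>W. \<exists>p. walk_betw E p a b \<and> set p \<subseteq> W)"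

definition isometric :: "('a \<Rightarrow> 'a \<Rightarrow> bool) \<Rightarrow> 'a set \<Rightarrow> bool" where
  "isometric E W \<longleftrightarrow> (\<forall>w\<in>W. \<forall>w'\<in>W. \<exists>p. walk_betw E p w w' \<and> length p = Suc (dist E w w') \<and> set p \<subseteq> W)"

end

theory Submission
  imports Defs
begin

lemma walk_len:
  assumes "walk_betw E p a b"
  shows "dist E a b \<le> length p - 1"
proof -
  have "length p = Suc (length p - 1)" using assms by (cases p) (auto simp: walk_betw_def)
  then show ?thesis unfolding dist_def by (metis (mono_tags, lifting) Least_le assms)
qed

lemma walk_ex:
  assumes "connected_graph V E" "a \<in> V" "b \<in> V"
  shows "\<exists>p. walk_betw E p a b \<and> length p = Suc (dist E a b)"
proof -
  obtain p where p: "walk_betw E p a b" using assms unfolding connected_graph_def by blast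
  have "length p = Suc (length p - 1)" using p by (cases p) (auto simp: walk_betw_def)
  then have "\<exists>n q. walk_betw E q a b \<and> length q = Suc n" using p by blast
  then show ?thesis unfolding dist_def by (rule LeastI_ex)
qed

lemma dist_step:
  assumes "connected_graph V E" "E a b" "b \<in> V" "c \<in> V"
  shows "dist E a c \<le> Suc (dist E b c)"
proof -
  obtain q where q: "walk_betw E q b c" "length q = Suc (dist E b c)"
    using walk_ex[OF assms(1,3,4)] by blast
  have "walk_betw E (a # q) a c"
    using q assms(2) by (cases q) (auto simp: walk_betw_def successively_Cons)
  from walk_len[OF this] q show ?thesis by simp
qed

lemma dist_self: "dist E a a = 0"
proof -
  have "walk_betw E [a] a a" by (simp add: walk_betw_def)
  from walk_len[OF this] show ?thesis by simp
qed

lemma dist_le_sym: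
  assumes "simple_graph V E" "connected_graph V E" "a \<in> V" "b \<in> V"
  shows "dist E b a \<le> dist E a b"
proof -
  obtain p where p: "walk_betw E p a b" "length p = Suc (dist E a b)"
    using walk_ex[OF assms(2,3,4)] by blast
  have sym: "\<And>x y. E x y \<Longrightarrow> E y x" using assms(1) unfolding simple_graph_def by blast
  have "successively (\<lambda>x y. E y x) p"
    using p(1) unfolding walk_betw_def by (auto intro: successively_mono sym)
  then have "walk_betw E (rev p) b a"
    using p(1) by (auto simp: walk_betw_def hd_rev last_rev)
  from walk_len[OF this] p show ?thesis by simp
qed

lemma dist_sym:
  assumes "simple_graph V E" "connected_graph V E" "a \<in> V" "b \<in> V"
  shows "dist E a b = dist E b a"
  using dist_le_sym[OF assms] dist_le_sym[OF assms(1,2,4,3)] by simp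

lemma dist_0:
  assumes "connected_graph V E" "a \<in> V" "b \<in> V" "dist E a b = 0"
  shows "a = b"
proof -
  obtain p where p: "walk_betw E p a b" "length p = Suc 0"
    using walk_ex[OF assms(1,2,3)] assms(4) by auto
  then show ?thesis by (cases p) (auto simp: walk_betw_def)
qed

lemma dist_1:
  assumes "connected_graph V E" "a \<in> V" "b \<in> V" "dist E a b = 1"
  shows "E a b"
proof -
  obtain p where p: "walk_betw E p a b" "length p = 2"
    using walk_ex[OF assms(1,2,3)] assms(4) by auto
  then obtain u v where "p = [u, v]"
    by (metis One_nat_def Suc_1 length_0_conv length_Suc_conv)
  then show ?thesis using p by (auto simp: walk_betw_def)
qed

lemma edge_dist:
  assumes "simple_graph V E" "E a b"
  shows "dist E a b = 1"
proof -
  have "walk_betw E [a, b] a b" using assms(2) by (simp add: walk_betw_def)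
  from walk_len[OF this] have "dist E a b \<le> 1" by simp
  moreover have "a \<noteq> b" using assms unfolding simple_graph_def by blast
  moreover have "dist E a b \<noteq> 0"
  proof
    assume "dist E a b = 0"
    have "\<exists>n q. walk_betw E q a b \<and> length q = Suc n" using \<open>walk_betw E [a, b] a b\<close> by fastforce
    then have "\<exists>q. walk_betw E q a b \<and> length q = Suc (dist E a b)"
      unfolding dist_def by (rule LeastI_ex)
    then obtain q where "walk_betw E q a b" "length q = 1" using \<open>dist E a b = 0\<close> by auto
    then show False using \<open>a \<noteq> b\<close> by (cases q) (auto simp: walk_betw_def)
  qed
  ultimately show ?thesis by simp
qed

lemma sg_sym: "simple_graph V E \<Longrightarrow> E a b \<Longrightarrow> E b a"
  unfolding simple_graph_def by blast

lemma sg_in: "simple_graph V E \<Longrightarrow> E a b \<Longrightarrow> a \<in> V \<and> b \<in> V"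
  unfolding simple_graph_def by blast

lemma sg_irr: "simple_graph V E \<Longrightarrow> \<not> E a a"
  unfolding simple_graph_def by blast

lemma auto_dist_le:
  assumes "automorphism V E \<phi>" "simple_graph V E" "connected_graph V E" "a \<in> V" "b \<in> V"
  shows "dist E (\<phi> a) (\<phi> b) \<le> dist E a b"
proof -
  obtain p where p: "walk_betw E p a b" "length p = Suc (dist E a b)"
    using walk_ex[OF assms(3,4,5)] by blast
  have "successively (\<lambda>x y. E (\<phi> x) (\<phi> y)) p"
  proof (rule successively_mono)
    show "successively E p" using p(1) unfolding walk_betw_def by simp
    fix u v assume uv: "E u v"
    have "u \<in> V" "v \<in> V" using sg_in[OF assms(2) uv] by auto
    moreover have "\<forall>a\<in>V. \<forall>b\<in>V. E a b \<longleftrightarrow> E (\<phi> a) (\<phi> b)"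
      using assms(1) unfolding automorphism_def by (elim conjE)
    ultimately show "E (\<phi> u) (\<phi> v)" using uv by blast
  qed
  then have "successively E (map \<phi> p)" by (simp only: successively_map)
  moreover have "map \<phi> p \<noteq> []" "hd (map \<phi> p) = \<phi> a" "last (map \<phi> p) = \<phi> b"
    using p(1) unfolding walk_betw_def by (simp_all add: hd_map last_map)
  ultimately have "walk_betw E (map \<phi> p) (\<phi> a) (\<phi> b)"
    unfolding walk_betw_def by blast
  from walk_len[OF this] p show ?thesis by simp
qed

lemma refl_auto: "reflection V E x y \<phi> \<Longrightarrow> automorphism V E \<phi>"
  unfolding reflection_def by (elim conjE) assumption

lemma refl_inv: "reflection V E x y \<phi> \<Longrightarrow> \<forall>v\<in>V. \<phi> (\<phi> v) = v"
  unfolding reflection_def by (elim conjE) assumption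

lemma refl_xy: "reflection V E x y \<phi> \<Longrightarrow> \<phi> x = y"
  unfolding reflection_def by (elim conjE) assumption

lemma refl_set: "reflection V E x y \<phi> \<Longrightarrow>
   {(a, b). a \<in> half V E x y \<and> b \<in> half V E y x \<and> E a b} = {(a, \<phi> a) | a. a \<in> half V E x y}"
  unfolding reflection_def by (elim conjE) assumption

lemma refl_mid0: "reflection V E x y \<phi> \<Longrightarrow> \<forall>v\<in>mid V E x y. \<phi> v = v"
  unfolding reflection_def by (elim conjE) assumption

lemma refl_mid:
  assumes "reflection V E x y \<phi>" "a \<in> mid V E x y" shows "\<phi> a = a"
  using refl_mid0[OF assms(1)] assms(2) by blast

lemma refl_dist:
  assumes "reflection V E x y \<phi>" "simple_graph V E" "connected_graph V E" "a \<in> V" "b \<in> V"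
  shows "dist E (\<phi> a) (\<phi> b) = dist E a b"
proof -
  have au: "automorphism V E \<phi>" and inv: "\<forall>v\<in>V. \<phi> (\<phi> v) = v"
    using refl_auto[OF assms(1)] refl_inv[OF assms(1)] by auto
  have "\<phi> ` V = V" using au unfolding automorphism_def bij_betw_def by blast
  then have inV: "\<phi> a \<in> V" "\<phi> b \<in> V" using assms(4,5) by auto
  have "dist E (\<phi> (\<phi> a)) (\<phi> (\<phi> b)) \<le> dist E (\<phi> a) (\<phi> b)"
    by (rule auto_dist_le[OF au assms(2,3) inV])
  moreover have "\<phi> (\<phi> a) = a" "\<phi> (\<phi> b) = b" using inv assms(4,5) by auto
  ultimately show ?thesis using auto_dist_le[OF au assms(2,3,4,5)] by simp
qed

lemma refl_V:
  assumes "reflection V E x y \<phi>" "a \<in> V" shows "\<phi> a \<in> V"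
proof -
  have "\<phi> ` V = V" using refl_auto[OF assms(1)] unfolding automorphism_def bij_betw_def by blast
  then show ?thesis using assms(2) by blast
qed

lemma refl_edge: "reflection V E x y \<phi> \<Longrightarrow> a \<in> V \<Longrightarrow> b \<in> V \<Longrightarrow> E a b \<Longrightarrow> E (\<phi> a) (\<phi> b)"
proof -
  assume "reflection V E x y \<phi>" "a \<in> V" "b \<in> V" "E a b"
  then show ?thesis using refl_auto[OF \<open>reflection V E x y \<phi>\<close>] unfolding automorphism_def by blast
qed


lemma refl_half:
  assumes "reflection V E x y \<phi>" "a \<in> half V E x y"
  shows "E a (\<phi> a) \<and> \<phi> a \<in> half V E y x"
proof -
  have "(a, \<phi> a) \<in> {(a, \<phi> a) | a. a \<in> half V E x y}" using assms(2) by blast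
  then have "(a, \<phi> a) \<in> {(a, b). a \<in> half V E x y \<and> b \<in> half V E y x \<and> E a b}"
    using refl_set[OF assms(1)] by simp
  then show ?thesis by simp
qed

lemma refl_match:
  assumes "reflection V E x y \<phi>" "a \<in> half V E x y" "b \<in> half V E y x" "E a b"
  shows "b = \<phi> a"
proof -
  have "(a, b) \<in> {(a, b). a \<in> half V E x y \<and> b \<in> half V E y x \<and> E a b}" using assms by simp
  then have "(a, b) \<in> {(a, \<phi> a) | a. a \<in> half V E x y}"
    using refl_set[OF assms(1)] by simp
  then show ?thesis by auto
qed

lemma same_side:
  assumes "reflection V E x y \<phi>" "simple_graph V E" "connected_graph V E"
    "a \<in> half V E x y" "b \<in> half V E x y"
  shows "dist E a b \<le> dist E a (\<phi> b)"
proof -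
  have bV: "b \<in> V" using assms(5) unfolding half_def by auto
  define c where "c = \<phi> b"
  have cV: "c \<in> V" using refl_V[OF assms(1) bV] c_def by simp
  have cH: "c \<notin> half V E x y" using refl_half[OF assms(1,5)] c_def unfolding half_def by auto
  have main: "\<And>a. walk_betw E p a c \<Longrightarrow> a \<in> half V E x y \<Longrightarrow> dist E a b \<le> length p - 1" for p
  proof (induction p)
    case Nil
    then show ?case by (simp add: walk_betw_def)
  next
    case (Cons a1 p)
    have a1: "a1 = a" using Cons.prems by (simp add: walk_betw_def)
    show ?case
    proof (cases p)
      case Nil
      then have "a = c" using Cons.prems a1 by (simp add: walk_betw_def)
      then show ?thesis using Cons.prems cH by simp
    next
      case (Cons a2 p')
      have e: "E a a2" and w2: "walk_betw E p a2 c"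
        using Cons.prems a1 Cons by (auto simp: walk_betw_def)
      have a2V: "a2 \<in> V" using sg_in[OF assms(2) e] by simp
      have aV: "a \<in> V" using sg_in[OF assms(2) e] by simp
      have st: "dist E a b \<le> Suc (dist E a2 b)" by (rule dist_step[OF assms(3) e a2V bV])
      have lw: "dist E a2 c \<le> length p - 1" by (rule walk_len[OF w2])
      have lp: "length p \<ge> 1" using Cons by simp
      consider "dist E a2 x < dist E a2 y" | "dist E a2 x = dist E a2 y" | "dist E a2 y < dist E a2 x"
        by linarith
      then show ?thesis
      proof cases
        case 1
        then have "a2 \<in> half V E x y" using a2V unfolding half_def by simp
        from Cons.IH[OF w2 this] st lp show ?thesis using a1 by simp
      next
        case 2
        then have "a2 \<in> mid V E x y" using a2V unfolding mid_def by simp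
        then have "\<phi> a2 = a2" by (rule refl_mid[OF assms(1)])
        then have "dist E a2 b = dist E a2 c"
          using refl_dist[OF assms(1,2,3) a2V bV] c_def by simp
        then show ?thesis using st lw lp a1 by simp
      next
        case 3
        then have "a2 \<in> half V E y x" using a2V unfolding half_def by simp
        then have "a2 = \<phi> a" using refl_match[OF assms(1)] Cons.prems(2) a1 e by blast
        then have "dist E a b = dist E a2 c"
          using refl_dist[OF assms(1,2,3) aV bV] c_def by simp
        then show ?thesis using lw lp a1 by simp
      qed
    qed
  qed
  have aV: "a \<in> V" using assms(4) unfolding half_def by auto
  obtain p where "walk_betw E p a c" "length p = Suc (dist E a c)"
    using walk_ex[OF assms(3) aV cV] by blast
  with main[OF this(1) assms(4)] show ?thesis using c_def by simp
qed

lemma sph1: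
  assumes "simple_graph V E" "connected_graph V E" "x \<in> V" "a \<in> sphere V E 1 x"
  shows "a \<in> V" "E a x" "E x a" "dist E x a = 1" "dist E a x = 1" "a \<noteq> x"
proof -
  show aV: "a \<in> V" using assms(4) unfolding sphere_def by auto
  show d: "dist E a x = 1" using assms(4) unfolding sphere_def by auto
  show e: "E a x" by (rule dist_1[OF assms(2) aV assms(3) d])
  show "E x a" by (rule sg_sym[OF assms(1) e])
  show "dist E x a = 1" using dist_sym[OF assms(1,2) aV assms(3)] d by simp
  show "a \<noteq> x" using e sg_irr[OF assms(1)] by blast
qed

lemma dist2:
  assumes "simple_graph V E" "connected_graph V E" "x \<in> V"
    "a \<in> sphere V E 1 x" "b \<in> sphere V E 1 x" "a \<noteq> b" "\<not> E a b"
  shows "dist E a b = 2"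
proof -
  note A = sph1[OF assms(1,2,3,4)] and B = sph1[OF assms(1,2,3,5)]
  have "dist E a b \<le> Suc (dist E x b)" by (rule dist_step[OF assms(2) A(2) assms(3) B(1)])
  then have "dist E a b \<le> 2" using B(4) by simp
  moreover have "dist E a b \<noteq> 0" using dist_0[OF assms(2) A(1) B(1)] assms(6) by blast
  moreover have "dist E a b \<noteq> 1" using dist_1[OF assms(2) A(1) B(1)] assms(7) by blast
  ultimately show ?thesis by linarith
qed

lemma kite:
  assumes G: "simple_graph V E" "connected_graph V E" "reflective V E" "x \<in> V"
    and L: "w \<in> sphere V E 1 x" "m \<in> sphere V E 1 x" "u \<in> sphere V E 1 x" "v \<in> sphere V E 1 x"
    and e: "E w m" "E m u" "E u v"
    and ne: "\<not> E w u" "u \<noteq> w" "\<not> E w v" "v \<noteq> w" "\<not> E m v" "v \<noteq> m"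
  shows "\<exists>m'\<in>sphere V E 1 x. E w m' \<and> E m' v"
proof -
  note W = sph1[OF G(1,2,4) L(1)] and M = sph1[OF G(1,2,4) L(2)]
    and U = sph1[OF G(1,2,4) L(3)] and VV = sph1[OF G(1,2,4) L(4)]
  have emw: "E m w" using sg_sym[OF G(1) e(1)] .
  obtain \<mu> where mu: "reflection V E m w \<mu>" using G(3) emw unfolding reflective_def by blast
  have mum: "\<mu> m = w" using refl_xy[OF mu] .
  have "x \<in> mid V E m w" using G(4) M(4) W(4) dist_sym[OF G(1,2) G(4) M(1)] dist_sym[OF G(1,2) G(4) W(1)]
    unfolding mid_def by simp
  then have mux: "\<mu> x = x" by (rule refl_mid[OF mu])
  have duw: "dist E u w = 2" by (rule dist2[OF G(1,2,4) L(3,1)]) (use ne sg_sym[OF G(1)] in auto)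
  have dvw: "dist E v w = 2" by (rule dist2[OF G(1,2,4) L(4,1)]) (use ne sg_sym[OF G(1)] in auto)
  have dvm: "dist E v m = 2" by (rule dist2[OF G(1,2,4) L(4,2)]) (use ne sg_sym[OF G(1)] in auto)
  have dum: "dist E u m = 1" by (rule edge_dist[OF G(1) sg_sym[OF G(1) e(2)]])
  have "v \<in> mid V E m w" using VV(1) dvw dvm unfolding mid_def by simp
  then have muv: "\<mu> v = v" by (rule refl_mid[OF mu])
  have e1: "E (\<mu> u) w" using refl_edge[OF mu U(1) M(1) sg_sym[OF G(1) e(2)]] mum by simp
  have e2: "E (\<mu> u) x" using refl_edge[OF mu U(1) G(4) U(2)] mux by simp
  have e3: "E (\<mu> u) v" using refl_edge[OF mu U(1) VV(1) e(3)] muv by simp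
  have "\<mu> u \<in> V" by (rule refl_V[OF mu U(1)])
  then have "\<mu> u \<in> sphere V E 1 x" using edge_dist[OF G(1) e2] unfolding sphere_def by simp
  then show ?thesis using e1 e3 sg_sym[OF G(1)] by blast
qed

lemma link_common:
  assumes G: "simple_graph V E" "connected_graph V E" "reflective V E" "x \<in> V"
    and ic: "induced_connected E (sphere V E 1 x)"
    and L: "w \<in> sphere V E 1 x" "v \<in> sphere V E 1 x" and ne: "v \<noteq> w" "\<not> E w v"
  shows "\<exists>m\<in>sphere V E 1 x. E w m \<and> E m v"
proof -
  let ?L = "sphere V E 1 x"
  let ?P = "\<lambda>u. u = w \<or> E w u \<or> (\<exists>m\<in>?L. E w m \<and> E m u)"
  have gen: "p \<noteq> [] \<Longrightarrow> hd p = w \<Longrightarrow> successively E p \<Longrightarrow> set p \<subseteq> ?L \<Longrightarrow> ?P (last p)" for p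
  proof (induction p rule: rev_induct)
    case Nil
    then show ?case by simp
  next
    case (snoc b ps)
    show ?case
    proof (cases "ps = []")
      case True
      then show ?thesis using snoc.prems by simp
    next
      case False
      define a where "a = last ps"
      have sps: "successively E ps" and eab: "E a b"
        using snoc.prems(3) False unfolding a_def by (auto simp: successively_append_iff)
      have "hd ps = w" using snoc.prems(2) False by simp
      then have Pa: "?P a" using snoc.IH[OF False _ sps] snoc.prems(4) unfolding a_def by auto
      have aL: "a \<in> ?L" using snoc.prems(4) False unfolding a_def by auto
      have bL: "b \<in> ?L" using snoc.prems(4) by auto
      have sym: "\<And>s t. E s t \<Longrightarrow> E t s" using sg_sym[OF G(1)] by blast
      have irr: "\<And>s. \<not> E s s" using sg_irr[OF G(1)] by blast
      have "?P b"
      proof (cases "a = w")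
        case True then show ?thesis using eab by simp
      next
        case aw: False
        show ?thesis
        proof (cases "E w a")
          case True
          then show ?thesis using eab aL by blast
        next
          case nwa: False
          then obtain m where m: "m \<in> ?L" "E w m" "E m a" using Pa aw by blast
          show ?thesis
          proof (cases "b = w \<or> E w b \<or> E m b")
            case True then show ?thesis using m by blast
          next
            case False
            then have "b \<noteq> m" using m(2) by blast
            then show ?thesis
              using kite[OF G L(1) m(1) aL bL m(2) m(3) eab nwa aw] False by blast
          qed
        qed
      qed
      then show ?thesis by simp
    qed
  qed
  obtain p where p: "walk_betw E p w v" "set p \<subseteq> ?L" using ic L unfolding induced_connected_def by blast
  have "?P v" using gen[of p] p unfolding walk_betw_def by auto
  then show ?thesis using ne by blast
qed

theorem lemma2p11:
  fixes V :: "'a set" and E :: "'a \<Rightarrow> 'a \<Rightarrow> bool" and x x' :: 'a and n :: nat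
  assumes "simple_graph V E" and "connected_graph V E" and "reflective V E"
    and "x \<in> V" and "x' \<in> V" and "n \<ge> 1" and "dist E x x' = n - 1"
    and "induced_connected E (sphere V E 1 x)"
  shows "isometric E (sphere V E 1 x \<inter> sphere V E n x')"
  unfolding isometric_def
proof (intro ballI)
  note G = assms(1,2,3,4)
  let ?L = "sphere V E 1 x"
  let ?W = "sphere V E 1 x \<inter> sphere V E n x'"
  fix w v assume w: "w \<in> ?W" and v: "v \<in> ?W"
  have wL: "w \<in> ?L" and vL: "v \<in> ?L" using w v by auto
  note Wf = sph1[OF G(1,2,4) wL] and Vf = sph1[OF G(1,2,4) vL]
  have dwx': "dist E w x' = n" and dvx': "dist E v x' = n" using w v unfolding sphere_def by auto
  show "\<exists>p. walk_betw E p w v \<and> length p = Suc (dist E w v) \<and> set p \<subseteq> ?W"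
  proof (cases "v = w")
    case True
    then show ?thesis using w dist_self[of E w] by (intro exI[of _ "[w]"]) (auto simp: walk_betw_def)
  next
    case vw: False
    show ?thesis
    proof (cases "E w v")
      case True
      then show ?thesis using w v edge_dist[OF G(1) True]
        by (intro exI[of _ "[w, v]"]) (auto simp: walk_betw_def)
    next
      case nwv: False
      have d2: "dist E w v = 2" by (rule dist2[OF G(1,2,4) wL vL]) (use vw nwv in auto)
      have "\<exists>m\<in>?W. E w m \<and> E m v"
      proof -
        obtain m where m: "m \<in> ?L" "E w m" "E m v"
          using link_common[OF G assms(8) wL vL vw nwv] by blast
        note Mf = sph1[OF G(1,2,4) m(1)]
        have dmx': "dist E m x' \<le> n"
          using dist_step[OF G(2) Mf(2) G(4) assms(5)] assms(6,7) by simp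
        show ?thesis
        proof (cases "dist E m x' = n")
          case True
          then show ?thesis using m unfolding sphere_def by auto
        next
          case False
          then have lt: "dist E m x' < n" using dmx' by simp
          have emw: "E m w" using sg_sym[OF G(1) m(2)] .
          obtain \<mu> where mu: "reflection V E m w \<mu>" using G(3) emw unfolding reflective_def by blast
          have mum: "\<mu> m = w" using refl_xy[OF mu] .
          have "x \<in> mid V E m w" using G(4) Mf(4) Wf(4) unfolding mid_def by simp
          then have mux: "\<mu> x = x" by (rule refl_mid[OF mu])
          have dvw: "dist E v w = 2" using d2 dist_sym[OF G(1,2) Wf(1) Vf(1)] by simp
          have dvm: "dist E v m = 1" by (rule edge_dist[OF G(1) sg_sym[OF G(1) m(3)]])
          have vH: "v \<in> half V E m w" using Vf(1) dvw dvm unfolding half_def by simp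
          have x'H: "x' \<in> half V E m w"
            using assms(5) lt dwx' dist_sym[OF G(1,2) assms(5) Mf(1)] dist_sym[OF G(1,2) assms(5) Wf(1)]
            unfolding half_def by simp
          have ss: "dist E x' v \<le> dist E x' (\<mu> v)" by (rule same_side[OF mu G(1,2) x'H vH])
          have muV: "\<mu> v \<in> V" by (rule refl_V[OF mu Vf(1)])
          have e2: "E (\<mu> v) x" using refl_edge[OF mu Vf(1) G(4) Vf(2)] mux by simp
          have e1: "E (\<mu> v) w" using refl_edge[OF mu Vf(1) Mf(1) sg_sym[OF G(1) m(3)]] mum by simp
          have e3: "E v (\<mu> v)" using refl_half[OF mu vH] by simp
          have up: "dist E (\<mu> v) x' \<le> n"
            using dist_step[OF G(2) e2 G(4) assms(5)] assms(6,7) by simp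
          have lo: "n \<le> dist E (\<mu> v) x'"
            using ss dist_sym[OF G(1,2) assms(5) Vf(1)] dist_sym[OF G(1,2) assms(5) muV] dvx' by simp
          have "\<mu> v \<in> ?W" using muV up lo edge_dist[OF G(1) e2] unfolding sphere_def by simp
          then show ?thesis using e1 e3 sg_sym[OF G(1)] by blast
        qed
      qed
      then obtain m where m: "m \<in> ?W" "E w m" "E m v" by blast
      show ?thesis using w v m d2
        by (intro exI[of _ "[w, m, v]"]) (auto simp: walk_betw_def)
    qed
  qed
qed

end
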